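(* Let $\alpha\in(0,2]$, $c>0$, $a>0$. The centered Gaussian process $\{G^{\alpha,c,a}(s):s\in[0,\infty)\}$ with covariance $\mathrm{Cov}(G^{\alpha,c,a}(s),G^{\alpha,c,a}(r))=\frac12\big(f^{\alpha,c,a}(s)+f^{\alpha,c,a}(r)-f^{\alpha,c,a}(|s-r|)\big)$ is non-Markovian.
   Context: Define $f^{\alpha,c,a}(0)=0$ and for $s>0$, $f^{\alpha,c,a}(s)=\frac{4s}{a\pi}\int_0^\infty\frac{\sin^2(u/2)}{u^2}(1-e^{-2c(u/s)^\alpha})\,\mathrm{d}u$. *)

theory Defs
  imports "HOL-Probability.Probability"
begin

text \<open>The function f^{alpha,c,a}: f(0) = 0 and for s > 0
  f(s) = 4s/(a pi) * int_0^infty sin^2(u/2)/u^2 * (1 - exp(-2c (u/s)^alpha)) du.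
  (Values for s < 0 are never used; we set them to 0.)\<close>
definition fac :: "real \<Rightarrow> real \<Rightarrow> real \<Rightarrow> real \<Rightarrow> real" where
  "fac \<alpha> c a s = (if s \<le> 0 then 0 else
     4 * s / (a * pi) *
     (LBINT u:{0<..}. (sin (u / 2))\<^sup>2 / u\<^sup>2 * (1 - exp (- 2 * c * (u / s) powr \<alpha>))))"

definition Kac :: "real \<Rightarrow> real \<Rightarrow> real \<Rightarrow> real \<Rightarrow> real \<Rightarrow> real" where
  "Kac \<alpha> c a s r = (fac \<alpha> c a s + fac \<alpha> c a r - fac \<alpha> c a \<bar>s - r\<bar>) / 2"

text \<open>X (indexed by [0,oo)) is a centered Gaussian process on M with covariance K:
  each X t is a real random variable, and every finite linear combination
  sum_{t in I} w t * X t has the centered normal law with variance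
  sum_{s,t} w s w t K s t (expressed through its characteristic function,
  which also covers the degenerate case of variance 0).\<close>
definition centered_gaussian_process ::
  "'a measure \<Rightarrow> (real \<Rightarrow> 'a \<Rightarrow> real) \<Rightarrow> (real \<Rightarrow> real \<Rightarrow> real) \<Rightarrow> bool" where
  "centered_gaussian_process M X K \<longleftrightarrow>
     (\<forall>t\<ge>0. X t \<in> borel_measurable M) \<and>
     (\<forall>I w \<theta>. finite I \<longrightarrow> I \<subseteq> {0..} \<longrightarrow>
        char (distr M borel (\<lambda>\<omega>. \<Sum>t\<in>I. w t * X t \<omega>)) \<theta> =
        exp (complex_of_real (- (\<theta>\<^sup>2 / 2) * (\<Sum>s\<in>I. \<Sum>t\<in>I. w s * w t * K s t))))"

definition nat_filtration :: "'a measure \<Rightarrow> (real \<Rightarrow> 'a \<Rightarrow> real) \<Rightarrow> real \<Rightarrow> 'a measure" where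
  "nat_filtration M X s = sigma (space M)
     (\<Union>r\<in>{0..s}. {X r -` A \<inter> space M | A. A \<in> sets borel})"

definition gen_sigma :: "'a measure \<Rightarrow> ('a \<Rightarrow> real) \<Rightarrow> 'a measure" where
  "gen_sigma M Y = sigma (space M) {Y -` A \<inter> space M | A. A \<in> sets borel}"

definition markov_process :: "'a measure \<Rightarrow> (real \<Rightarrow> 'a \<Rightarrow> real) \<Rightarrow> bool" where
  "markov_process M X \<longleftrightarrow>
     (\<forall>s t A. 0 \<le> s \<longrightarrow> s \<le> t \<longrightarrow> A \<in> sets borel \<longrightarrow>
        (AE \<omega> in M. real_cond_exp M (nat_filtration M X s) (\<lambda>x. indicator A (X t x)) \<omega>
                    = real_cond_exp M (gen_sigma M (X s)) (\<lambda>x. indicator A (X t x)) \<omega>))"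

end

theory Submission
  imports Defs
begin

definition Sf :: "real \<Rightarrow> real" where "Sf u = (sin (u/2))^2 / u^2"
definition Pf :: "real \<Rightarrow> real" where "Pf w = (1 - cos w)^2 * (1 + 2 * cos w) / w^2"

lemma Sf_nonneg: "0 \<le> Sf u" by (simp add: Sf_def)

lemma Sf_bound: "Sf u \<le> 2 / (1 + u^2)"
proof (cases "u = 0")
  case True thus ?thesis by (simp add: Sf_def)
next
  case False
  have s1: "(sin (u/2))^2 \<le> u^2/4"
  proof -
    have "\<bar>sin (u/2)\<bar> \<le> \<bar>u/2\<bar>" by (rule abs_sin_x_le_abs_x)
    hence "\<bar>sin (u/2)\<bar>^2 \<le> \<bar>u/2\<bar>^2" by (intro power_mono) auto
    thus ?thesis by (simp add: power_divide)
  qed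
  have s2: "(sin (u/2))^2 \<le> 1" by (simp add: abs_square_le_1)
  have pos: "0 < u^2" using False by simp
  have "Sf u * (1 + u^2) = (sin (u/2))^2/u^2 + (sin(u/2))^2" using False by (simp add: Sf_def field_simps)
  also have "(sin (u/2))^2/u^2 \<le> 1/4" using s1 pos by (simp add: field_simps)
  hence "(sin (u/2))^2/u^2 + (sin(u/2))^2 \<le> 2" using s2 by linarith
  finally have "Sf u * (1+u^2) \<le> 2" by simp
  moreover have "0 < 1 + u^2" by (simp add: add_pos_nonneg)
  ultimately show ?thesis by (simp add: field_simps)
qed

lemma Sf_meas[measurable]: "Sf \<in> borel_measurable borel"
  unfolding Sf_def by measurable

lemma inv_sq_int: "set_integrable lborel {0<..} (\<lambda>x::real. 1 / (1 + x^2))"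
  using integrable_I0i_1_div_plus_square unfolding interval_lebesgue_integrable_def einterval_def
  by (simp add: zero_ereal_def greaterThan_def)

lemma inv_sq_LBINT: "(LBINT x:{0<..}. 1 / (1 + x^2)) = pi/2"
  using LBINT_I0i_1_div_plus_square interval_integral_to_infinity_eq[where a=0 and M=lborel and f="\<lambda>x. 1/(1+x^2)"]
  by (simp add: zero_ereal_def)

lemma Sf_int: "set_integrable lborel {0<..} Sf"
proof (rule set_integrable_bound[where f="\<lambda>x. (2::real) * (1 / (1 + x^2))"])
  show "set_integrable lborel {0<..} (\<lambda>x. (2::real) * (1 / (1 + x^2)))"
    using set_integrable_mult_right[OF inv_sq_int, of 2] by simp
  show "set_borel_measurable lborel {0<..} Sf" unfolding set_borel_measurable_def by measurable
  show "AE x in lborel. x \<in> {0<..} \<longrightarrow> norm (Sf x) \<le> norm ((2::real) * (1 / (1 + x^2)))"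
    using Sf_bound Sf_nonneg by (auto intro!: AE_I2 simp: add_pos_nonneg)
qed

lemma scale_int:
  fixes g :: "real \<Rightarrow> real" assumes k: "k > 0"
  shows "(LBINT u:{0<..}. g u) = k * (LBINT w:{0<..}. g (k*w))"
proof -
  have "(LBINT u:{0<..}. g u) = (\<integral>u. indicator {0<..} u *\<^sub>R g u \<partial>lborel)"
    by (simp add: set_lebesgue_integral_def)
  also have "\<dots> = \<bar>k\<bar> *\<^sub>R (\<integral>x. indicator {0<..} (0 + k*x) *\<^sub>R g (0 + k * x) \<partial>lborel)"
    using k by (intro lborel_integral_real_affine) simp
  also have "(\<lambda>x. indicator {0<..} (0 + k*x) *\<^sub>R g (0 + k * x)) = (\<lambda>x. indicator {0<..} x *\<^sub>R g (k * x))"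
    using k by (auto simp: indicator_def zero_less_mult_iff)
  finally show ?thesis using k by (simp add: set_lebesgue_integral_def)
qed

lemma scale_integrable:
  fixes g :: "real \<Rightarrow> real" assumes k: "k > 0"
  shows "set_integrable lborel {0<..} (\<lambda>w. g (k*w)) \<longleftrightarrow> set_integrable lborel {0<..} g"
proof -
  have "(\<lambda>x. indicator {0<..} (0 + k*x) *\<^sub>R g (0 + k * x)) = (\<lambda>x. indicator {0<..} x *\<^sub>R g (k * x))"
    using k by (auto simp: indicator_def zero_less_mult_iff)
  moreover have "integrable lborel (\<lambda>x. indicator {0<..} (0 + k*x) *\<^sub>R g (0 + k * x)) \<longleftrightarrow> integrable lborel (\<lambda>u. indicator {0<..} u *\<^sub>R g u)"
    using k by (intro lborel_integrable_real_affine_iff) simp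
  ultimately show ?thesis by (simp add: set_integrable_def)
qed

lemma Sf_cos: "Sf x = (1 - cos x) / (2 * x^2)"
proof -
  have "cos (2 * (x/2)) = 1 - 2 * sin (x/2) ^ 2" by (rule cos_double_sin)
  hence e: "(sin (x/2))^2 = (1 - cos x)/2" by simp
  show ?thesis unfolding Sf_def e by simp
qed

lemma Q_Pf:
  assumes "w \<noteq> 0"
  shows "3 * Sf w - 12 * Sf (2*w) + 9 * Sf (3*w) = - Pf w"
proof -
  have c2: "cos (2*w) = 2 * cos w ^ 2 - 1" by (rule cos_double_cos)
  have c3: "cos (3*w) = 4 * cos w ^ 3 - 3 * cos w" by (rule cos_treble_cos)
  show ?thesis using assms unfolding Sf_cos Pf_def c2 c3
    by (simp add: field_simps power2_eq_square power3_eq_cube)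
qed

lemma Pf_nonneg:
  assumes "0 < w" "w \<le> 2*pi/3"
  shows "0 \<le> Pf w"
proof -
  have "cos (2*pi/3) \<le> cos w" using assms by (intro cos_monotone_0_pi_le) auto
  hence "0 \<le> 1 + 2 * cos w" using cos_120 by simp
  thus ?thesis unfolding Pf_def by simp
qed

lemma Pf_mid:
  assumes "pi/3 \<le> w" "w \<le> pi/2"
  shows "1/16 \<le> Pf w"
proof -
  have wpos: "0 < w" using assms(1) pi_gt_zero by (smt (verit) divide_pos_pos)
  have "cos w \<le> cos (pi/3)" using assms by (intro cos_monotone_0_pi_le) auto
  hence c1: "cos w \<le> 1/2" using cos_60 by simp
  have c0: "0 \<le> cos w" using assms wpos by (intro cos_ge_zero) auto
  have a1: "1/4 \<le> (1 - cos w)^2"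
  proof -
    have "1/2 \<le> 1 - cos w" using c1 by simp
    hence "(1/2)^2 \<le> (1 - cos w)^2" by (intro power_mono) auto
    thus ?thesis by (simp add: power2_eq_square)
  qed
  have a2: "1 \<le> 1 + 2 * cos w" using c0 by simp
  have w2: "w^2 \<le> 4"
  proof -
    have "w \<le> 2" using assms(2) pi_less_4 by simp
    hence "w^2 \<le> 2^2" using wpos by (intro power_mono) auto
    thus ?thesis by simp
  qed
  have "1/4 * 1 \<le> (1 - cos w)^2 * (1 + 2 * cos w)"
    using a1 a2 by (intro mult_mono) auto
  hence "1/4 \<le> (1 - cos w)^2 * (1 + 2 * cos w)" by simp
  moreover have "0 < w^2" using wpos by simp
  ultimately have "(1/4) / 4 \<le> (1 - cos w)^2 * (1 + 2 * cos w) / w^2"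
    using w2 by (intro frac_le) auto
  thus ?thesis unfolding Pf_def by simp
qed

lemma Pf_abs:
  assumes "1 \<le> w"
  shows "\<bar>Pf w\<bar> \<le> 24 / (1 + w^2)"
proof -
  have b1: "\<bar>(1 - cos w)^2\<bar> \<le> 4"
  proof -
    have "\<bar>1 - cos w\<bar> \<le> 2" using cos_le_one[of w] cos_ge_minus_one[of w] by linarith
    hence "\<bar>1 - cos w\<bar>^2 \<le> 2^2" by (intro power_mono) auto
    thus ?thesis by simp
  qed
  have b2: "\<bar>1 + 2 * cos w\<bar> \<le> 3" using cos_le_one[of w] cos_ge_minus_one[of w] by linarith
  have "\<bar>(1 - cos w)^2 * (1 + 2 * cos w)\<bar> \<le> 4 * 3"
    unfolding abs_mult using b1 b2 by (intro mult_mono) auto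
  moreover have "0 < w^2" using assms by simp
  moreover have "12 / w^2 \<le> 24 / (1 + w^2)"
  proof -
    have "1 \<le> w^2" using assms by (simp add: one_le_power)
    thus ?thesis using \<open>0 < w^2\<close> by (simp add: field_simps)
  qed
  ultimately show ?thesis unfolding Pf_def abs_divide
    by (smt (verit, best) divide_right_mono zero_less_power_abs_iff power2_abs abs_of_pos)
qed

definition Ef :: "real \<Rightarrow> real \<Rightarrow> real \<Rightarrow> real \<Rightarrow> real" where
  "Ef \<alpha> c h w = exp (- 2 * c * (w / h) powr \<alpha>)"

definition Qf :: "real \<Rightarrow> real" where "Qf w = 3 * Sf w - 12 * Sf (2*w) + 9 * Sf (3*w)"

definition Jf :: "real \<Rightarrow> real \<Rightarrow> real \<Rightarrow> real" where
  "Jf \<alpha> c s = (LBINT u:{0<..}. (sin (u / 2))\<^sup>2 / u\<^sup>2 * (1 - exp (- 2 * c * (u / s) powr \<alpha>)))"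

lemma fac_Jf: "s > 0 \<Longrightarrow> fac \<alpha> c a s = 4 * s / (a * pi) * Jf \<alpha> c s"
  unfolding fac_def Jf_def by simp

lemma Ef_pos: "0 < Ef \<alpha> c h w" unfolding Ef_def by simp

lemma Ef_le1: "0 \<le> c \<Longrightarrow> Ef \<alpha> c h w \<le> 1"
  unfolding Ef_def by simp

lemma Ef_mono:
  assumes "0 \<le> \<alpha>" "0 \<le> c" "0 < h" "0 \<le> w1" "w1 \<le> w2"
  shows "Ef \<alpha> c h w2 \<le> Ef \<alpha> c h w1"
proof -
  have "(w1/h) powr \<alpha> \<le> (w2/h) powr \<alpha>"
    using assms by (intro powr_mono2) (auto intro: divide_right_mono)
  hence "2 * c * (w1/h) powr \<alpha> \<le> 2 * c * (w2/h) powr \<alpha>" using assms by (intro mult_left_mono) auto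
  thus ?thesis unfolding Ef_def by simp
qed

lemma Ef_meas[measurable]: "Ef \<alpha> c h \<in> borel_measurable borel"
  unfolding Ef_def by measurable

lemma Sf_scaled_int: "k > 0 \<Longrightarrow> set_integrable lborel {0<..} (\<lambda>w. Sf (k*w))"
  using scale_integrable[of k Sf] Sf_int by simp

lemma Sf_scaled_LBINT: "k > 0 \<Longrightarrow> (LBINT w:{0<..}. Sf (k*w)) = (LBINT u:{0<..}. Sf u) / k"
  using scale_int[of k Sf] by simp

lemma Qf_int: "set_integrable lborel {0<..} Qf"
proof -
  have "set_integrable lborel {0<..} (\<lambda>w. 3 * Sf w - 12 * Sf (2*w) + 9 * Sf (3*w))"
    using Sf_int Sf_scaled_int[of 2] Sf_scaled_int[of 3]
    by (intro set_integral_add set_integral_diff set_integrable_mult_right) auto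
  thus ?thesis unfolding Qf_def by simp
qed

lemma Qf_LBINT: "(LBINT w:{0<..}. Qf w) = 0"
proof -
  have i1: "set_integrable lborel {0<..} (\<lambda>w. 3 * Sf w)" using Sf_int by auto
  have i2: "set_integrable lborel {0<..} (\<lambda>w. 12 * Sf (2*w))" using Sf_scaled_int[of 2] by auto
  have i3: "set_integrable lborel {0<..} (\<lambda>w. 9 * Sf (3*w))" using Sf_scaled_int[of 3] by auto
  have "(LBINT w:{0<..}. Qf w) = (LBINT w:{0<..}. 3 * Sf w - 12 * Sf (2*w) + 9 * Sf (3*w))"
    unfolding Qf_def by simp
  also have "\<dots> = (LBINT w:{0<..}. 3 * Sf w - 12 * Sf (2*w)) + (LBINT w:{0<..}. 9 * Sf (3*w))"
    using i1 i2 i3 by (intro set_integral_add(2)) auto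
  also have "(LBINT w:{0<..}. 3 * Sf w - 12 * Sf (2*w)) = (LBINT w:{0<..}. 3 * Sf w) - (LBINT w:{0<..}. 12 * Sf (2*w))"
    using i1 i2 by (intro set_integral_diff(2))
  finally show ?thesis using Sf_scaled_LBINT[of 2] Sf_scaled_LBINT[of 3] by simp
qed

lemma SE_int:
  assumes "k > 0" "c \<ge> 0"
  shows "set_integrable lborel {0<..} (\<lambda>w. Sf (k*w) * (1 - Ef \<alpha> c h w))"
proof (rule set_integrable_bound[OF Sf_scaled_int[OF assms(1)]])
  show "set_borel_measurable lborel {0<..} (\<lambda>w. Sf (k*w) * (1 - Ef \<alpha> c h w))"
    unfolding set_borel_measurable_def by measurable
  show "AE x in lborel. x \<in> {0<..} \<longrightarrow> norm (Sf (k*x) * (1 - Ef \<alpha> c h x)) \<le> norm (Sf (k*x))"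
  proof (intro AE_I2 impI)
    fix x :: real
    have "0 \<le> 1 - Ef \<alpha> c h x" "1 - Ef \<alpha> c h x \<le> 1" using Ef_le1[OF assms(2), of \<alpha> h x] Ef_pos[of \<alpha> c h x] by auto
    thus "norm (Sf (k*x) * (1 - Ef \<alpha> c h x)) \<le> norm (Sf (k*x))"
      using Sf_nonneg[of "k*x"] by (simp add: abs_mult mult_left_le)
  qed
qed

lemma QE_int:
  assumes "c \<ge> 0"
  shows "set_integrable lborel {0<..} (\<lambda>w. - Qf w * Ef \<alpha> c h w)"
proof (rule set_integrable_bound[OF Qf_int])
  show "set_borel_measurable lborel {0<..} (\<lambda>w. - Qf w * Ef \<alpha> c h w)"
    unfolding set_borel_measurable_def Qf_def by measurable
  show "AE x in lborel. x \<in> {0<..} \<longrightarrow> norm (- Qf x * Ef \<alpha> c h x) \<le> norm (Qf x)"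
  proof (intro AE_I2 impI)
    fix x :: real
    have "0 \<le> Ef \<alpha> c h x" "Ef \<alpha> c h x \<le> 1" using Ef_le1[OF assms] Ef_pos[of \<alpha> c h x] by auto
    thus "norm (- Qf x * Ef \<alpha> c h x) \<le> norm (Qf x)"
      by (simp add: abs_mult mult_left_le)
  qed
qed

lemma J_scale:
  assumes k: "k > 0" and h: "h > 0"
  shows "Jf \<alpha> c (k*h) = k * (LBINT w:{0<..}. Sf (k*w) * (1 - Ef \<alpha> c h w))"
proof -
  have "Jf \<alpha> c (k*h) = k * (LBINT w:{0<..}. (sin (k*w / 2))\<^sup>2 / (k*w)\<^sup>2 * (1 - exp (- 2 * c * (k*w / (k*h)) powr \<alpha>)))"
    unfolding Jf_def by (rule scale_int[OF k])
  also have "(\<lambda>w. (sin (k*w / 2))\<^sup>2 / (k*w)\<^sup>2 * (1 - exp (- 2 * c * (k*w / (k*h)) powr \<alpha>))) = (\<lambda>w. Sf (k*w) * (1 - Ef \<alpha> c h w))"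
    using k by (auto simp: Sf_def Ef_def)
  finally show ?thesis .
qed

lemma combo:
  assumes c: "c \<ge> 0" and h: "h > 0"
  shows "3 * Jf \<alpha> c h - 6 * Jf \<alpha> c (2*h) + 3 * Jf \<alpha> c (3*h) = (LBINT w:{0<..}. Ef \<alpha> c h w * Pf w)"
proof -
  let ?E = "Ef \<alpha> c h"
  have j1: "Jf \<alpha> c h = (LBINT w:{0<..}. Sf w * (1 - ?E w))" using J_scale[of 1 h \<alpha> c] h by simp
  have j2: "Jf \<alpha> c (2*h) = 2 * (LBINT w:{0<..}. Sf (2*w) * (1 - ?E w))" using J_scale[of 2 h \<alpha> c] h by simp
  have j3: "Jf \<alpha> c (3*h) = 3 * (LBINT w:{0<..}. Sf (3*w) * (1 - ?E w))" using J_scale[of 3 h \<alpha> c] h by simp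
  have i1: "set_integrable lborel {0<..} (\<lambda>w. 3 * (Sf w * (1 - ?E w)))" using SE_int[of 1 c \<alpha> h] c by auto
  have i2: "set_integrable lborel {0<..} (\<lambda>w. 12 * (Sf (2*w) * (1 - ?E w)))" using SE_int[of 2 c \<alpha> h] c by auto
  have i3: "set_integrable lborel {0<..} (\<lambda>w. 9 * (Sf (3*w) * (1 - ?E w)))" using SE_int[of 3 c \<alpha> h] c by auto
  have "3 * Jf \<alpha> c h - 6 * Jf \<alpha> c (2*h) + 3 * Jf \<alpha> c (3*h) =
     (LBINT w:{0<..}. 3 * (Sf w * (1 - ?E w))) - (LBINT w:{0<..}. 12 * (Sf (2*w) * (1 - ?E w)))
     + (LBINT w:{0<..}. 9 * (Sf (3*w) * (1 - ?E w)))"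
    unfolding j1 j2 j3 by simp
  also have "\<dots> = (LBINT w:{0<..}. 3 * (Sf w * (1 - ?E w)) - 12 * (Sf (2*w) * (1 - ?E w)) + 9 * (Sf (3*w) * (1 - ?E w)))"
    using i1 i2 i3 by (simp add: set_integral_add set_integral_diff)
  also have "\<dots> = (LBINT w:{0<..}. Qf w + (- Qf w * ?E w))"
    unfolding Qf_def by (simp add: algebra_simps)
  also have "\<dots> = (LBINT w:{0<..}. Qf w) + (LBINT w:{0<..}. - Qf w * ?E w)"
    using Qf_int QE_int[OF c] by (rule set_integral_add(2))
  also have "\<dots> = (LBINT w:{0<..}. - Qf w * ?E w)" using Qf_LBINT by simp
  also have "\<dots> = (LBINT w:{0<..}. ?E w * Pf w)"
    by (intro set_lebesgue_integral_cong) (auto simp: Qf_def Q_Pf)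
  finally show ?thesis .
qed

lemma EP_int:
  assumes "c \<ge> 0"
  shows "set_integrable lborel {0<..} (\<lambda>w. Ef \<alpha> c h w * Pf w)"
proof -
  have "set_integrable lborel {0<..} (\<lambda>w. - Qf w * Ef \<alpha> c h w) = set_integrable lborel {0<..} (\<lambda>w. Ef \<alpha> c h w * Pf w)"
    by (intro set_integrable_cong) (auto simp: Qf_def Q_Pf)
  thus ?thesis using QE_int[OF assms] by simp
qed

lemma ind_int:
  fixes C :: real
  shows "set_integrable lborel {0<..} (\<lambda>w. indicator {pi/3..pi/2} w * C)"
    and "(LBINT w:{0<..}. indicator {pi/3..pi/2} w * C) = C * (pi/6)"
proof -
  have eq: "(\<lambda>w. indicator {0<..} w *\<^sub>R (indicator {pi/3..pi/2} w * C)) = (\<lambda>w::real. indicator {pi/3..pi/2} w * C)"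
    by (auto simp: indicator_def fun_eq_iff) (insert pi_gt_zero, linarith)
  have ii: "integrable lborel (\<lambda>w::real. indicator {pi/3..pi/2} w * C)"
    by (intro integrable_mult_left integrable_real_indicator) auto
  thus "set_integrable lborel {0<..} (\<lambda>w. indicator {pi/3..pi/2} w * C)"
    unfolding set_integrable_def eq .
  have "(LBINT w:{0<..}. indicator {pi/3..pi/2} w * C) = (LBINT w. indicator {pi/3..pi/2} w * C)"
    unfolding set_lebesgue_integral_def eq ..
  also have "\<dots> = measure lborel {pi/3..pi/2} * C" by simp
  also have "measure lborel {pi/3..pi/2} = pi/6" using pi_gt_zero by (simp add: measure_lborel_Icc)
  finally show "(LBINT w:{0<..}. indicator {pi/3..pi/2} w * C) = C * (pi/6)" by simp
qed

lemma lower_bound: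
  assumes a: "\<alpha> > 0" and c: "c \<ge> 0" and h: "h > 0"
  shows "Ef \<alpha> c h (pi/2) * pi / 96 - 12 * pi * Ef \<alpha> c h (2*pi/3) \<le> (LBINT w:{0<..}. Ef \<alpha> c h w * Pf w)"
proof -
  define e1 where "e1 = Ef \<alpha> c h (pi/2)"
  define e2 where "e2 = Ef \<alpha> c h (2*pi/3)"
  define L where "L w = indicator {pi/3..pi/2} w * (e1/16) - 24 * e2 * (1 / (1 + w^2))" for w :: real
  have Lint: "set_integrable lborel {0<..} L"
    unfolding L_def using ind_int(1) set_integrable_mult_right[OF inv_sq_int, of "24 * e2"]
    by (intro set_integral_diff(1)) auto
  have "(LBINT w:{0<..}. L w) = (LBINT w:{0<..}. indicator {pi/3..pi/2} w * (e1/16)) - (LBINT w:{0<..}. 24 * e2 * (1 / (1 + w^2)))"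
    unfolding L_def using ind_int(1) set_integrable_mult_right[OF inv_sq_int, of "24 * e2"]
    by (intro set_integral_diff(2)) auto
  also have "(LBINT w:{0<..}. 24 * e2 * (1 / (1 + w^2))) = 24 * e2 * (pi/2)"
    by (subst set_integral_mult_right) (simp only: inv_sq_LBINT)
  also have "(LBINT w:{0<..}. indicator {pi/3..pi/2} w * (e1/16)) = e1/16 * (pi/6)"
    by (rule ind_int(2))
  also have "e1/16 * (pi/6) - 24 * e2 * (pi/2) = e1 * pi / 96 - 12 * pi * e2"
    by simp
  finally have LI: "(LBINT w:{0<..}. L w) = e1 * pi / 96 - 12 * pi * e2" .
  have pw: "L w \<le> Ef \<alpha> c h w * Pf w" if w: "w \<in> {0<..}" for w
  proof (cases "w \<le> 2*pi/3")
    case True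
    have P0: "0 \<le> Pf w" using Pf_nonneg[of w] w True by auto
    have Ew: "0 < Ef \<alpha> c h w" by (rule Ef_pos)
    have neg: "0 \<le> 24 * e2 * (1 / (1 + w^2))" unfolding e2_def using Ef_pos[of \<alpha> c h "2*pi/3"]
      by (intro mult_nonneg_nonneg divide_nonneg_pos) (auto simp: add_pos_nonneg)
    show ?thesis
    proof (cases "w \<in> {pi/3..pi/2}")
      case True
      have "e1 \<le> Ef \<alpha> c h w" unfolding e1_def using True a c h w by (intro Ef_mono) auto
      moreover have "1/16 \<le> Pf w" using True Pf_mid by auto
      ultimately have "e1 * (1/16) \<le> Ef \<alpha> c h w * Pf w"
        using Ef_pos[of \<alpha> c h "pi/2"] unfolding e1_def by (intro mult_mono) auto
      thus ?thesis unfolding L_def using True neg by simp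
    next
      case False
      have "0 \<le> Ef \<alpha> c h w * Pf w" using P0 Ew by simp
      thus ?thesis unfolding L_def using neg False by simp
    qed
  next
    case False
    hence w1: "1 \<le> w" "w > pi/2" "2*pi/3 \<le> w" using pi_ge_two by auto
    have "Ef \<alpha> c h w \<le> e2" unfolding e2_def using w1 a c h pi_gt_zero by (intro Ef_mono) auto
    moreover have "\<bar>Pf w\<bar> \<le> 24 / (1 + w^2)" using Pf_abs w1 by auto
    ultimately have "Ef \<alpha> c h w * \<bar>Pf w\<bar> \<le> e2 * (24 / (1 + w^2))"
      using Ef_pos[of \<alpha> c h w] by (intro mult_mono) auto
    moreover have "- (Ef \<alpha> c h w * \<bar>Pf w\<bar>) \<le> Ef \<alpha> c h w * Pf w"
    proof -
      have "- \<bar>Pf w\<bar> \<le> Pf w" by simp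
      hence "Ef \<alpha> c h w * (- \<bar>Pf w\<bar>) \<le> Ef \<alpha> c h w * Pf w"
        using Ef_pos[of \<alpha> c h w] by (intro mult_left_mono) auto
      thus ?thesis by simp
    qed
    ultimately show ?thesis unfolding L_def using w1 by auto
  qed
  have "(LBINT w:{0<..}. L w) \<le> (LBINT w:{0<..}. Ef \<alpha> c h w * Pf w)"
    using Lint EP_int[OF c] pw by (intro set_integral_mono)
  thus ?thesis using LI unfolding e1_def e2_def by simp
qed

lemma exp11: "1152 < exp (11::real)"
proof -
  have "2 \<le> exp (1::real)" using exp_ge_add_one_self[of 1] by simp
  hence "2^11 \<le> exp (1::real) ^ 11" by (intro power_mono) auto
  also have "exp (1::real) ^ 11 = exp (real 11 * 1)" by (subst exp_of_nat_mult) simp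
  finally show ?thesis by simp
qed

lemma exists_h:
  assumes a: "\<alpha> > 0" and c: "c > 0" and aa: "a > 0"
  shows "\<exists>h>0. 3 * fac \<alpha> c a h - 3 * fac \<alpha> c a (2*h) + fac \<alpha> c a (3*h) > 0"
proof -
  define D where "D = (2*pi/3) powr \<alpha> - (pi/2) powr \<alpha>"
  have D: "D > 0" unfolding D_def using a pi_gt_zero by (simp add: powr_less_mono2)
  define H where "H = 2 * c * D / 11"
  have H: "H > 0" unfolding H_def using D c by simp
  define h where "h = H powr (1/\<alpha>)"
  have h: "h > 0" unfolding h_def using H by simp
  have hH: "h powr \<alpha> = H" unfolding h_def using H a by (simp add: powr_powr)
  have Ex: "Ef \<alpha> c h x = exp (- 2 * c * x powr \<alpha> / H)" if "x \<ge> 0" for x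
    unfolding Ef_def using that h by (simp add: powr_divide hH)
  have "Ef \<alpha> c h (2*pi/3) = Ef \<alpha> c h (pi/2) * exp (- 11)"
  proof -
    have "- 2 * c * (2*pi/3) powr \<alpha> / H = - 2 * c * (pi/2) powr \<alpha> / H + - 11"
      using H c D unfolding H_def D_def by (simp add: field_simps)
    hence "exp (- 2 * c * (2*pi/3) powr \<alpha> / H) = exp (- 2 * c * (pi/2) powr \<alpha> / H) * exp (- 11)"
      by (simp only: exp_add)
    moreover have "Ef \<alpha> c h (2*pi/3) = exp (- 2 * c * (2*pi/3) powr \<alpha> / H)" using Ex[of "2*pi/3"] pi_gt_zero by simp
    moreover have "Ef \<alpha> c h (pi/2) = exp (- 2 * c * (pi/2) powr \<alpha> / H)" using Ex[of "pi/2"] pi_gt_zero by simp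
    ultimately show ?thesis by simp
  qed
  moreover have "exp (-11::real) < 1/1152" using exp11 by (simp add: exp_minus field_simps)
  ultimately have "Ef \<alpha> c h (2*pi/3) < Ef \<alpha> c h (pi/2) / 1152"
    using Ef_pos[of \<alpha> c h "pi/2"] by (simp add: mult_strict_left_mono[of _ "1/1152"] )
  hence pos: "0 < Ef \<alpha> c h (pi/2) * pi / 96 - 12 * pi * Ef \<alpha> c h (2*pi/3)"
    using pi_gt_zero by (simp add: field_simps)
  have comb: "0 < 3 * Jf \<alpha> c h - 6 * Jf \<alpha> c (2*h) + 3 * Jf \<alpha> c (3*h)"
  proof -
    have lb: "Ef \<alpha> c h (pi/2) * pi / 96 - 12 * pi * Ef \<alpha> c h (2*pi/3) \<le> (LBINT w:{0<..}. Ef \<alpha> c h w * Pf w)"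
      using c by (intro lower_bound[OF a _ h]) simp
    have "0 < (LBINT w:{0<..}. Ef \<alpha> c h w * Pf w)" using lb pos by linarith
    thus ?thesis using combo[of c h \<alpha>] c h by simp
  qed
  have "3 * fac \<alpha> c a h - 3 * fac \<alpha> c a (2*h) + fac \<alpha> c a (3*h)
        = 4 * h / (a * pi) * (3 * Jf \<alpha> c h - 6 * Jf \<alpha> c (2*h) + 3 * Jf \<alpha> c (3*h))"
    using h aa pi_gt_zero by (simp add: fac_Jf field_simps)
  also have "\<dots> > 0" using comb h aa pi_gt_zero by simp
  finally show ?thesis using h by blast
qed

lemma (in prob_space) gauss_trig:
  assumes cg: "centered_gaussian_process M G K" and I: "finite I" "I \<subseteq> {0..}"
  shows "(\<integral>\<omega>. cos (\<Sum>t\<in>I. w t * G t \<omega>) \<partial>M) = exp (- (\<Sum>s\<in>I. \<Sum>t\<in>I. w s * w t * K s t) / 2)"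
    and "(\<integral>\<omega>. sin (\<Sum>t\<in>I. w t * G t \<omega>) \<partial>M) = 0"
proof -
  let ?L = "\<lambda>\<omega>. \<Sum>t\<in>I. w t * G t \<omega>"
  let ?Q = "\<Sum>s\<in>I. \<Sum>t\<in>I. w s * w t * K s t"
  have gm: "\<And>t. t \<ge> 0 \<Longrightarrow> G t \<in> borel_measurable M" using cg unfolding centered_gaussian_process_def by blast
  have meas: "?L \<in> borel_measurable M"
    using I(2) by (intro borel_measurable_sum borel_measurable_times borel_measurable_const gm) auto
  have ch: "char (distr M borel ?L) 1 = exp (complex_of_real (- (1^2/2) * ?Q))"
    using cg I unfolding centered_gaussian_process_def by blast
  have "char (distr M borel ?L) 1 = (CLINT \<omega>|M. iexp (?L \<omega>))"
    unfolding char_def using meas by (simp add: integral_distr)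
  hence eq: "(CLINT \<omega>|M. iexp (?L \<omega>)) = exp (complex_of_real (- (?Q / 2)))" using ch by simp
  have int: "integrable M (\<lambda>\<omega>. iexp (?L \<omega>))"
  proof (rule integrable_iexp)
    show "(\<lambda>\<omega>. complex_of_real (?L \<omega>)) \<in> borel_measurable M" using measurable_compose[OF meas borel_measurable_of_real] by (simp add: o_def)
  qed simp
  have "(\<integral>\<omega>. cos (?L \<omega>) \<partial>M) = (\<integral>\<omega>. Re (iexp (?L \<omega>)) \<partial>M)" by (simp add: Re_exp)
  also have "\<dots> = Re (CLINT \<omega>|M. iexp (?L \<omega>))" using int by simp
  also have "\<dots> = exp (- ?Q / 2)" unfolding eq by (simp add: Re_exp)
  finally show "(\<integral>\<omega>. cos (?L \<omega>) \<partial>M) = exp (- ?Q / 2)" .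
  have "(\<integral>\<omega>. sin (?L \<omega>) \<partial>M) = (\<integral>\<omega>. Im (iexp (?L \<omega>)) \<partial>M)" by (simp add: Im_exp)
  also have "\<dots> = Im (CLINT \<omega>|M. iexp (?L \<omega>))" using int by simp
  also have "\<dots> = 0" unfolding eq by (simp add: Im_exp)
  finally show "(\<integral>\<omega>. sin (?L \<omega>) \<partial>M) = 0" .
qed

definition Q3 :: "real \<Rightarrow> real \<Rightarrow> real \<Rightarrow> real \<Rightarrow> real \<Rightarrow> real \<Rightarrow> real" where
  "Q3 f1 f2 f3 p q r = p^2*f1 + q^2*f2 + r^2*f3 + p*q*f2 + p*r*(f1+f3-f2) + q*r*(f2+f3-f1)"

lemma fac_0: "fac \<alpha> c a 0 = 0" unfolding fac_def by simp

lemma (in prob_space) gauss3: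
  assumes cg: "centered_gaussian_process M G (Kac \<alpha> c a)" and h: "h > 0"
  shows "(\<integral>\<omega>. cos (p * G h \<omega> + q * G (2*h) \<omega> + r * G (3*h) \<omega>) \<partial>M)
          = exp (- Q3 (fac \<alpha> c a h) (fac \<alpha> c a (2*h)) (fac \<alpha> c a (3*h)) p q r / 2)"
    and "(\<integral>\<omega>. sin (p * G h \<omega> + q * G (2*h) \<omega> + r * G (3*h) \<omega>) \<partial>M) = 0"
proof -
  define w where "w t = (if t = h then p else if t = 2*h then q else r)" for t
  let ?I = "{h, 2*h, 3*h}"
  have I: "finite ?I" "?I \<subseteq> {0..}" using h by auto
  have d: "h \<noteq> 2*h" "h \<noteq> 3*h" "2*h \<noteq> 3*h" using h by auto
  have sum: "(\<Sum>t\<in>?I. w t * G t \<omega>) = p * G h \<omega> + q * G (2*h) \<omega> + r * G (3*h) \<omega>" for \<omega>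
    using d unfolding w_def by simp
  have ab: "\<bar>h - 2*h\<bar> = h" "\<bar>h - 3*h\<bar> = 2*h" "\<bar>2*h - 3*h\<bar> = h"
           "\<bar>2*h - h\<bar> = h" "\<bar>3*h - h\<bar> = 2*h" "\<bar>3*h - 2*h\<bar> = h" "\<bar>h\<bar> = h" "\<bar>h*2\<bar> = h*2" using h by auto
  have Q: "(\<Sum>s\<in>?I. \<Sum>t\<in>?I. w s * w t * Kac \<alpha> c a s t) = Q3 (fac \<alpha> c a h) (fac \<alpha> c a (2*h)) (fac \<alpha> c a (3*h)) p q r"
    using d unfolding w_def Kac_def Q3_def by (simp add: ab fac_0 field_simps power2_eq_square)
  show "(\<integral>\<omega>. cos (p * G h \<omega> + q * G (2*h) \<omega> + r * G (3*h) \<omega>) \<partial>M)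
          = exp (- Q3 (fac \<alpha> c a h) (fac \<alpha> c a (2*h)) (fac \<alpha> c a (3*h)) p q r / 2)"
    using gauss_trig(1)[OF cg I, of w] unfolding sum Q .
  show "(\<integral>\<omega>. sin (p * G h \<omega> + q * G (2*h) \<omega> + r * G (3*h) \<omega>) \<partial>M) = 0"
    using gauss_trig(2)[OF cg I, of w] unfolding sum .
qed

lemma (in prob_space) bnd_int:
  fixes f :: "'a \<Rightarrow> 'b::{banach,second_countable_topology}"
  shows "f \<in> borel_measurable M \<Longrightarrow> (\<And>x. x \<in> space M \<Longrightarrow> norm (f x) \<le> B) \<Longrightarrow> integrable M f"
  by (intro integrable_const_bound[where B=B]) (auto intro!: AE_I2)

lemma (in prob_space) bnd_int':
  fixes f :: "'a \<Rightarrow> 'b::{banach,second_countable_topology}"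
  shows "(\<And>x. x \<in> space M \<Longrightarrow> norm (f x) \<le> B) \<Longrightarrow> f \<in> borel_measurable M \<Longrightarrow> integrable M f"
  using bnd_int by blast

lemma (in prob_space) tilt:
  assumes Y[measurable]: "Y \<in> borel_measurable M" and Z[measurable]: "Z \<in> borel_measurable M"
    and Zb: "\<And>\<omega>. \<omega> \<in> space M \<Longrightarrow> 0 \<le> Z \<omega> \<and> Z \<omega> \<le> B"
    and k: "(\<integral>\<omega>. Z \<omega> \<partial>M) = k" "k > 0"
    and hc: "\<And>\<theta>. (\<integral>\<omega>. Z \<omega> * cos (\<theta> * Y \<omega>) \<partial>M) = k * (\<integral>\<omega>. cos (\<theta> * Y \<omega>) \<partial>M)"
    and hs: "\<And>\<theta>. (\<integral>\<omega>. Z \<omega> * sin (\<theta> * Y \<omega>) \<partial>M) = k * (\<integral>\<omega>. sin (\<theta> * Y \<omega>) \<partial>M)"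
    and D[measurable]: "D \<in> sets borel"
  shows "(\<integral>\<omega>. Z \<omega> * indicator D (Y \<omega>) \<partial>M) = k * prob (Y -` D \<inter> space M)"
proof -
  define g where "g \<omega> = Z \<omega> / k" for \<omega>
  have g[measurable]: "g \<in> borel_measurable M" unfolding g_def by measurable
  have g0: "\<And>\<omega>. \<omega> \<in> space M \<Longrightarrow> 0 \<le> g \<omega>" unfolding g_def using Zb k by auto
  have gb: "\<And>\<omega>. \<omega> \<in> space M \<Longrightarrow> norm (g \<omega>) \<le> B / k" unfolding g_def using Zb k
    by (auto intro: divide_right_mono)
  have gint: "integrable M g" using bnd_int[OF g gb] .
  have gI: "(\<integral>\<omega>. g \<omega> \<partial>M) = 1" unfolding g_def using k by simp
  define N where "N = density M (\<lambda>\<omega>. ennreal (g \<omega>))"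
  have sN: "sets N = sets M" "space N = space M" unfolding N_def by auto
  have YN: "Y \<in> borel_measurable N" using assms(1) measurable_cong_sets[OF sN(1) refl, of borel] by metis
  have "emeasure N (space N) = (\<integral>\<^sup>+ \<omega>. ennreal (g \<omega>) * indicator (space M) \<omega> \<partial>M)"
    unfolding N_def by (simp add: emeasure_density)
  also have "\<dots> = (\<integral>\<^sup>+ \<omega>. ennreal (g \<omega>) \<partial>M)"
    by (intro nn_integral_cong) (auto simp: indicator_def)
  also have "\<dots> = ennreal (\<integral>\<omega>. g \<omega> \<partial>M)"
    using gint g0 by (intro nn_integral_eq_integral) (auto intro!: AE_I2)
  finally have "emeasure N (space N) = 1" using gI by simp
  hence pN: "prob_space N" by (rule prob_spaceI)
  define \<nu> where "\<nu> = distr N borel Y"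
  have rd: "real_distribution \<nu>"
  proof -
    interpret N: prob_space N by (rule pN)
    have "prob_space \<nu>" unfolding \<nu>_def by (rule N.prob_space_distr[OF YN])
    thus ?thesis unfolding real_distribution_def real_distribution_axioms_def \<nu>_def by simp
  qed
  have rd2: "real_distribution (distr M borel Y)"
    unfolding real_distribution_def real_distribution_axioms_def using prob_space_distr[OF Y] by simp
  have chareq: "char \<nu> = char (distr M borel Y)"
  proof
    fix \<theta> :: real
    have i1: "integrable M (\<lambda>\<omega>. g \<omega> *\<^sub>R iexp (\<theta> * Y \<omega>))"
      by (rule bnd_int[where B="B/k"]) (use gb in \<open>auto simp: norm_mult\<close>)
    have i2: "integrable M (\<lambda>\<omega>. iexp (\<theta> * Y \<omega>))"
      by (rule bnd_int[where B=1]) (auto simp: norm_mult)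
    have "char \<nu> \<theta> = (CLINT \<omega>|N. iexp (\<theta> * Y \<omega>))"
      unfolding char_def \<nu>_def using YN by (simp add: integral_distr)
    also have "\<dots> = (CLINT \<omega>|M. g \<omega> *\<^sub>R iexp (\<theta> * Y \<omega>))"
      unfolding N_def using g0 by (intro integral_density) (auto intro!: AE_I2)
    also have "\<dots> = (CLINT \<omega>|M. iexp (\<theta> * Y \<omega>))"
    proof (rule complex_eqI)
      have "Re (CLINT \<omega>|M. g \<omega> *\<^sub>R iexp (\<theta> * Y \<omega>)) = (\<integral>\<omega>. Re (g \<omega> *\<^sub>R iexp (\<theta> * Y \<omega>)) \<partial>M)"
        by (rule integral_Re[OF i1, symmetric])
      also have "\<dots> = (\<integral>\<omega>. Z \<omega> * cos (\<theta> * Y \<omega>) \<partial>M) / k"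
        by (simp add: g_def Re_exp)
      also have "\<dots> = (\<integral>\<omega>. cos (\<theta> * Y \<omega>) \<partial>M)" using hc k by simp
      also have "\<dots> = (\<integral>\<omega>. Re (iexp (\<theta> * Y \<omega>)) \<partial>M)" by (simp add: Re_exp)
      also have "\<dots> = Re (CLINT \<omega>|M. iexp (\<theta> * Y \<omega>))" by (rule integral_Re[OF i2])
      finally show "Re (CLINT \<omega>|M. g \<omega> *\<^sub>R iexp (\<theta> * Y \<omega>)) = Re (CLINT \<omega>|M. iexp (\<theta> * Y \<omega>))" .
      have "Im (CLINT \<omega>|M. g \<omega> *\<^sub>R iexp (\<theta> * Y \<omega>)) = (\<integral>\<omega>. Im (g \<omega> *\<^sub>R iexp (\<theta> * Y \<omega>)) \<partial>M)"
        by (rule integral_Im[OF i1, symmetric])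
      also have "\<dots> = (\<integral>\<omega>. Z \<omega> * sin (\<theta> * Y \<omega>) \<partial>M) / k"
        by (simp add: g_def Im_exp)
      also have "\<dots> = (\<integral>\<omega>. sin (\<theta> * Y \<omega>) \<partial>M)" using hs k by simp
      also have "\<dots> = (\<integral>\<omega>. Im (iexp (\<theta> * Y \<omega>)) \<partial>M)" by (simp add: Im_exp)
      also have "\<dots> = Im (CLINT \<omega>|M. iexp (\<theta> * Y \<omega>))" by (rule integral_Im[OF i2])
      finally show "Im (CLINT \<omega>|M. g \<omega> *\<^sub>R iexp (\<theta> * Y \<omega>)) = Im (CLINT \<omega>|M. iexp (\<theta> * Y \<omega>))" .
    qed
    also have "\<dots> = char (distr M borel Y) \<theta>"
      unfolding char_def by (simp add: integral_distr)
    finally show "char \<nu> \<theta> = char (distr M borel Y) \<theta>" .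
  qed
  have nu: "\<nu> = distr M borel Y" by (rule Levy_uniqueness[OF rd rd2 chareq])
  have "emeasure \<nu> D = emeasure N (Y -` D \<inter> space M)"
    unfolding \<nu>_def using YN sN by (simp add: emeasure_distr)
  also have "\<dots> = (\<integral>\<^sup>+ \<omega>. ennreal (g \<omega>) * indicator (Y -` D \<inter> space M) \<omega> \<partial>M)"
    unfolding N_def by (intro emeasure_density) auto
  also have "\<dots> = (\<integral>\<^sup>+ \<omega>. ennreal (g \<omega> * indicator D (Y \<omega>)) \<partial>M)"
    by (intro nn_integral_cong) (auto simp: indicator_def)
  also have "\<dots> = ennreal (\<integral>\<omega>. g \<omega> * indicator D (Y \<omega>) \<partial>M)"
  proof (intro nn_integral_eq_integral)
    show "integrable M (\<lambda>\<omega>. g \<omega> * indicator D (Y \<omega>))"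
    proof (rule bnd_int[where B="B/k"])
      fix x assume x: "x \<in> space M"
      have "0 \<le> B / k" using gb[OF x] by (metis norm_ge_zero order_trans)
      thus "norm (g x * indicator D (Y x)) \<le> B / k" using gb[OF x] by (auto simp: indicator_def)
    qed simp
    show "AE x in M. 0 \<le> g x * indicator D (Y x)" using g0 by (auto intro!: AE_I2)
  qed
  finally have e1: "emeasure \<nu> D = ennreal (\<integral>\<omega>. g \<omega> * indicator D (Y \<omega>) \<partial>M)" .
  have e2: "emeasure \<nu> D = ennreal (prob (Y -` D \<inter> space M))"
    unfolding nu by (simp add: emeasure_distr emeasure_eq_measure)
  have nn: "0 \<le> (\<integral>\<omega>. g \<omega> * indicator D (Y \<omega>) \<partial>M)"
    using g0 by (intro integral_nonneg_AE) (auto intro!: AE_I2)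
  have "(\<integral>\<omega>. g \<omega> * indicator D (Y \<omega>) \<partial>M) = prob (Y -` D \<inter> space M)"
    using e1 e2 nn by simp
  moreover have "(\<integral>\<omega>. g \<omega> * indicator D (Y \<omega>) \<partial>M) = (\<integral>\<omega>. Z \<omega> * indicator D (Y \<omega>) \<partial>M) / k"
    unfolding g_def by simp
  ultimately show ?thesis using k by (simp add: field_simps)
qed

lemma (in prob_space) int_ind:
  assumes [measurable]: "Y \<in> borel_measurable M" "D \<in> sets borel"
  shows "(\<integral>\<omega>. indicator D (Y \<omega>) \<partial>M) = prob (Y -` D \<inter> space M)"
proof -
  have "(\<integral>\<omega>. indicator D (Y \<omega>) \<partial>M) = (\<integral>\<omega>. indicator (Y -` D \<inter> space M) \<omega> \<partial>M)"
    by (rule Bochner_Integration.integral_cong[OF refl]) (auto simp: indicator_def)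
  also have "\<dots> = prob (Y -` D \<inter> space M)" by (simp add: Int_absorb2)
  finally show ?thesis .
qed

lemma (in prob_space) int_ind2:
  assumes [measurable]: "Y \<in> borel_measurable M" "D \<in> sets borel" "Y' \<in> borel_measurable M" "D' \<in> sets borel"
  shows "(\<integral>\<omega>. indicator D (Y \<omega>) * indicator D' (Y' \<omega>) \<partial>M) = prob (Y -` D \<inter> Y' -` D' \<inter> space M)"
proof -
  have "(\<integral>\<omega>. indicator D (Y \<omega>) * indicator D' (Y' \<omega>) \<partial>M) = (\<integral>\<omega>. indicator (Y -` D \<inter> Y' -` D' \<inter> space M) \<omega> \<partial>M :: real)"
    by (rule Bochner_Integration.integral_cong[OF refl]) (auto simp: indicator_def)
  also have "\<dots> = prob (Y -` D \<inter> Y' -` D' \<inter> space M)"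
  proof -
    have "Y -` D \<inter> Y' -` D' \<inter> space M \<in> sets M" by measurable
    thus ?thesis by (simp add: Int_absorb2 sets.Int_space_eq2)
  qed
  finally show ?thesis .
qed

lemma lin3p:
  fixes f g h :: "'a \<Rightarrow> real"
  assumes "integrable M f" "integrable M g" "integrable M h"
  shows "(\<integral>x. f x + (g x / 2 + h x / 2) \<partial>M) = (\<integral>x. f x \<partial>M) + ((\<integral>x. g x \<partial>M) / 2 + (\<integral>x. h x \<partial>M) / 2)"
  using assms by simp

lemma lin3m:
  fixes f g h :: "'a \<Rightarrow> real"
  assumes "integrable M f" "integrable M g" "integrable M h"
  shows "(\<integral>x. f x + (g x / 2 - h x / 2) \<partial>M) = (\<integral>x. f x \<partial>M) + ((\<integral>x. g x \<partial>M) / 2 - (\<integral>x. h x \<partial>M) / 2)"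
  using assms by simp

lemma (in prob_space) indep2:
  fixes Y1 Y2 :: "'a \<Rightarrow> real"
  assumes Y1[measurable]: "Y1 \<in> borel_measurable M" and Y2[measurable]: "Y2 \<in> borel_measurable M"
    and Jc: "\<And>a b. (\<integral>\<omega>. cos (a * Y1 \<omega> + b * Y2 \<omega>) \<partial>M) = exp (- (a^2 * s1 + b^2 * s2) / 2)"
    and Js: "\<And>a b. (\<integral>\<omega>. sin (a * Y1 \<omega> + b * Y2 \<omega>) \<partial>M) = 0"
    and D[measurable]: "D \<in> sets borel" and B[measurable]: "B \<in> sets borel"
  shows "prob (Y2 -` D \<inter> Y1 -` B \<inter> space M) = prob (Y2 -` D \<inter> space M) * prob (Y1 -` B \<inter> space M)"
proof -
  have ic: "integrable M (\<lambda>\<omega>. cos (a * Y1 \<omega> + b * Y2 \<omega>))" for a b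
  proof -
    have m: "(\<lambda>\<omega>. cos (a * Y1 \<omega> + b * Y2 \<omega>)) \<in> borel_measurable M" by measurable
    show ?thesis by (rule bnd_int[OF m, where B=1]) simp
  qed
  have is': "integrable M (\<lambda>\<omega>. sin (a * Y1 \<omega> + b * Y2 \<omega>))" for a b
  proof -
    have m: "(\<lambda>\<omega>. sin (a * Y1 \<omega> + b * Y2 \<omega>)) \<in> borel_measurable M" by measurable
    show ?thesis by (rule bnd_int[OF m, where B=1]) simp
  qed
  have c1: "(\<integral>\<omega>. cos (a * Y1 \<omega>) \<partial>M) = exp (- (a^2 * s1) / 2)" for a
    using Jc[of a 0] by simp
  have s1': "(\<integral>\<omega>. sin (a * Y1 \<omega>) \<partial>M) = 0" for a
    using Js[of a 0] by simp
  have c2: "(\<integral>\<omega>. cos (b * Y2 \<omega>) \<partial>M) = exp (- (b^2 * s2) / 2)" for b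
    using Jc[of 0 b] by simp
  have s2': "(\<integral>\<omega>. sin (b * Y2 \<omega>) \<partial>M) = 0" for b
    using Js[of 0 b] by simp
  have ic1: "integrable M (\<lambda>\<omega>. cos (a * Y1 \<omega>))" for a using ic[of a 0] by simp
  have is1: "integrable M (\<lambda>\<omega>. sin (a * Y1 \<omega>))" for a using is'[of a 0] by simp
  have ic2: "integrable M (\<lambda>\<omega>. cos (a * Y2 \<omega>))" for a using ic[of 0 a] by simp
  have is2: "integrable M (\<lambda>\<omega>. sin (a * Y2 \<omega>))" for a using is'[of 0 a] by simp
  have st1: "(\<integral>\<omega>. cos (a * Y1 \<omega>) * indicator D (Y2 \<omega>) \<partial>M) = exp (- (a^2 * s1) / 2) * prob (Y2 -` D \<inter> space M)
          \<and> (\<integral>\<omega>. sin (a * Y1 \<omega>) * indicator D (Y2 \<omega>) \<partial>M) = 0" for a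
  proof
    let ?e = "exp (- (a^2 * s1) / 2)"
    let ?P = "prob (Y2 -` D \<inter> space M)"
    have iD: "integrable M (\<lambda>\<omega>. indicator D (Y2 \<omega>) :: real)" by (rule bnd_int'[where B=1], simp, measurable)
    have ic1D: "integrable M (\<lambda>\<omega>. cos (a * Y1 \<omega>) * indicator D (Y2 \<omega>))"
      by (rule bnd_int'[where B=1], simp add: indicator_def, measurable)
    have is1D: "integrable M (\<lambda>\<omega>. sin (a * Y1 \<omega>) * indicator D (Y2 \<omega>))"
      by (rule bnd_int'[where B=1], simp add: indicator_def, measurable)
    have pDe: "(\<integral>\<omega>. indicator D (Y2 \<omega>) \<partial>M) = ?P" by (rule int_ind) auto
    have T1: "(\<integral>\<omega>. (1 + cos (a * Y1 \<omega>)) * indicator D (Y2 \<omega>) \<partial>M) = (1 + ?e) * ?P"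
    proof (rule tilt[where B=2])
      show "(\<lambda>\<omega>. 1 + cos (a * Y1 \<omega>)) \<in> borel_measurable M" by measurable
      show "0 \<le> 1 + cos (a * Y1 \<omega>) \<and> 1 + cos (a * Y1 \<omega>) \<le> 2" for \<omega>
        using cos_ge_minus_one[of "a * Y1 \<omega>"] cos_le_one[of "a * Y1 \<omega>"] by linarith
      show "(\<integral>\<omega>. 1 + cos (a * Y1 \<omega>) \<partial>M) = 1 + ?e"
        using ic1 c1 by (simp add: prob_space)
      show "0 < 1 + ?e" by (simp add: add_pos_pos)
      fix \<theta> :: real
      have eq: "(\<lambda>\<omega>. (1 + cos (a * Y1 \<omega>)) * cos (\<theta> * Y2 \<omega>)) =
        (\<lambda>\<omega>. cos (\<theta> * Y2 \<omega>) + (cos (a * Y1 \<omega> + \<theta> * Y2 \<omega>) / 2 + cos (a * Y1 \<omega> + (-\<theta>) * Y2 \<omega>) / 2))"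
        by (auto simp: cos_add cos_diff sin_add sin_diff field_simps)
      have "(\<integral>\<omega>. (1 + cos (a * Y1 \<omega>)) * cos (\<theta> * Y2 \<omega>) \<partial>M)
          = (\<integral>\<omega>. cos (\<theta> * Y2 \<omega>) \<partial>M) + ((\<integral>\<omega>. cos (a * Y1 \<omega> + \<theta> * Y2 \<omega>) \<partial>M) / 2 + (\<integral>\<omega>. cos (a * Y1 \<omega> + (-\<theta>) * Y2 \<omega>) \<partial>M) / 2)"
        unfolding eq by (rule lin3p[OF ic2 ic ic])
      also have "\<dots> = (1 + ?e) * (\<integral>\<omega>. cos (\<theta> * Y2 \<omega>) \<partial>M)"
        unfolding Jc c2 by (simp add: exp_add[symmetric] field_simps)
      finally show "(\<integral>\<omega>. (1 + cos (a * Y1 \<omega>)) * cos (\<theta> * Y2 \<omega>) \<partial>M) = (1 + ?e) * (\<integral>\<omega>. cos (\<theta> * Y2 \<omega>) \<partial>M)" .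
      have eq2: "(\<lambda>\<omega>. (1 + cos (a * Y1 \<omega>)) * sin (\<theta> * Y2 \<omega>)) =
        (\<lambda>\<omega>. sin (\<theta> * Y2 \<omega>) + (sin (a * Y1 \<omega> + \<theta> * Y2 \<omega>) / 2 - sin (a * Y1 \<omega> + (-\<theta>) * Y2 \<omega>) / 2))"
        by (auto simp: cos_add cos_diff sin_add sin_diff field_simps)
      have "(\<integral>\<omega>. (1 + cos (a * Y1 \<omega>)) * sin (\<theta> * Y2 \<omega>) \<partial>M)
          = (\<integral>\<omega>. sin (\<theta> * Y2 \<omega>) \<partial>M) + ((\<integral>\<omega>. sin (a * Y1 \<omega> + \<theta> * Y2 \<omega>) \<partial>M) / 2 - (\<integral>\<omega>. sin (a * Y1 \<omega> + (-\<theta>) * Y2 \<omega>) \<partial>M) / 2)"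
        unfolding eq2 by (rule lin3m[OF is2 is' is'])
      also have "\<dots> = (1 + ?e) * (\<integral>\<omega>. sin (\<theta> * Y2 \<omega>) \<partial>M)"
        unfolding Js s2' by simp
      finally show "(\<integral>\<omega>. (1 + cos (a * Y1 \<omega>)) * sin (\<theta> * Y2 \<omega>) \<partial>M) = (1 + ?e) * (\<integral>\<omega>. sin (\<theta> * Y2 \<omega>) \<partial>M)" .
    qed auto
    have "(\<integral>\<omega>. (1 + cos (a * Y1 \<omega>)) * indicator D (Y2 \<omega>) \<partial>M)
        = (\<integral>\<omega>. indicator D (Y2 \<omega>) \<partial>M) + (\<integral>\<omega>. cos (a * Y1 \<omega>) * indicator D (Y2 \<omega>) \<partial>M)"
      using iD ic1D by (simp add: distrib_right Bochner_Integration.integral_add)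
    thus "(\<integral>\<omega>. cos (a * Y1 \<omega>) * indicator D (Y2 \<omega>) \<partial>M) = ?e * ?P"
      using T1 pDe by (simp add: field_simps)
    have T2: "(\<integral>\<omega>. (1 + sin (a * Y1 \<omega>)) * indicator D (Y2 \<omega>) \<partial>M) = 1 * ?P"
    proof (rule tilt[where B=2])
      show "(\<lambda>\<omega>. 1 + sin (a * Y1 \<omega>)) \<in> borel_measurable M" by measurable
      show "0 \<le> 1 + sin (a * Y1 \<omega>) \<and> 1 + sin (a * Y1 \<omega>) \<le> 2" for \<omega>
        using sin_ge_minus_one[of "a * Y1 \<omega>"] sin_le_one[of "a * Y1 \<omega>"] by linarith
      show "(\<integral>\<omega>. 1 + sin (a * Y1 \<omega>) \<partial>M) = 1"
        using is1 s1' by (simp add: prob_space)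
      fix \<theta> :: real
      have eq: "(\<lambda>\<omega>. (1 + sin (a * Y1 \<omega>)) * cos (\<theta> * Y2 \<omega>)) =
        (\<lambda>\<omega>. cos (\<theta> * Y2 \<omega>) + (sin (a * Y1 \<omega> + \<theta> * Y2 \<omega>) / 2 + sin (a * Y1 \<omega> + (-\<theta>) * Y2 \<omega>) / 2))"
        by (auto simp: cos_add cos_diff sin_add sin_diff field_simps)
      have "(\<integral>\<omega>. (1 + sin (a * Y1 \<omega>)) * cos (\<theta> * Y2 \<omega>) \<partial>M)
          = (\<integral>\<omega>. cos (\<theta> * Y2 \<omega>) \<partial>M) + ((\<integral>\<omega>. sin (a * Y1 \<omega> + \<theta> * Y2 \<omega>) \<partial>M) / 2 + (\<integral>\<omega>. sin (a * Y1 \<omega> + (-\<theta>) * Y2 \<omega>) \<partial>M) / 2)"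
        unfolding eq by (rule lin3p[OF ic2 is' is'])
      also have "\<dots> = 1 * (\<integral>\<omega>. cos (\<theta> * Y2 \<omega>) \<partial>M)"
        unfolding Js by simp
      finally show "(\<integral>\<omega>. (1 + sin (a * Y1 \<omega>)) * cos (\<theta> * Y2 \<omega>) \<partial>M) = 1 * (\<integral>\<omega>. cos (\<theta> * Y2 \<omega>) \<partial>M)" .
      have eq2: "(\<lambda>\<omega>. (1 + sin (a * Y1 \<omega>)) * sin (\<theta> * Y2 \<omega>)) =
        (\<lambda>\<omega>. sin (\<theta> * Y2 \<omega>) + (cos (a * Y1 \<omega> + (-\<theta>) * Y2 \<omega>) / 2 - cos (a * Y1 \<omega> + \<theta> * Y2 \<omega>) / 2))"
        by (auto simp: cos_add cos_diff sin_add sin_diff field_simps)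
      have "(\<integral>\<omega>. (1 + sin (a * Y1 \<omega>)) * sin (\<theta> * Y2 \<omega>) \<partial>M)
          = (\<integral>\<omega>. sin (\<theta> * Y2 \<omega>) \<partial>M) + ((\<integral>\<omega>. cos (a * Y1 \<omega> + (-\<theta>) * Y2 \<omega>) \<partial>M) / 2 - (\<integral>\<omega>. cos (a * Y1 \<omega> + \<theta> * Y2 \<omega>) \<partial>M) / 2)"
        unfolding eq2 by (rule lin3m[OF is2 ic ic])
      also have "\<dots> = 1 * (\<integral>\<omega>. sin (\<theta> * Y2 \<omega>) \<partial>M)"
        unfolding Jc s2' by simp
      finally show "(\<integral>\<omega>. (1 + sin (a * Y1 \<omega>)) * sin (\<theta> * Y2 \<omega>) \<partial>M) = 1 * (\<integral>\<omega>. sin (\<theta> * Y2 \<omega>) \<partial>M)" .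
    qed auto
    have "(\<integral>\<omega>. (1 + sin (a * Y1 \<omega>)) * indicator D (Y2 \<omega>) \<partial>M)
        = (\<integral>\<omega>. indicator D (Y2 \<omega>) \<partial>M) + (\<integral>\<omega>. sin (a * Y1 \<omega>) * indicator D (Y2 \<omega>) \<partial>M)"
      using iD is1D by (simp add: distrib_right Bochner_Integration.integral_add)
    thus "(\<integral>\<omega>. sin (a * Y1 \<omega>) * indicator D (Y2 \<omega>) \<partial>M) = 0"
      using T2 pDe by simp
  qed
  show ?thesis
  proof (cases "prob (Y2 -` D \<inter> space M) = 0")
    case True
    have "prob (Y2 -` D \<inter> Y1 -` B \<inter> space M) \<le> prob (Y2 -` D \<inter> space M)"
      by (intro finite_measure_mono) auto
    thus ?thesis using True measure_nonneg[of M "Y2 -` D \<inter> Y1 -` B \<inter> space M"] by simp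
  next
    case False
    hence kpos: "0 < prob (Y2 -` D \<inter> space M)" using measure_nonneg[of M "Y2 -` D \<inter> space M"] by linarith
    have "(\<integral>\<omega>. indicator D (Y2 \<omega>) * indicator B (Y1 \<omega>) \<partial>M) = prob (Y2 -` D \<inter> space M) * prob (Y1 -` B \<inter> space M)"
    proof (rule tilt[where B=1])
      show "(\<lambda>\<omega>. indicator D (Y2 \<omega>)) \<in> borel_measurable M" by measurable
      show "0 \<le> (indicator D (Y2 \<omega>)::real) \<and> (indicator D (Y2 \<omega>)::real) \<le> 1" for \<omega>
        by (auto simp: indicator_def)
      show "(\<integral>\<omega>. indicator D (Y2 \<omega>) \<partial>M) = prob (Y2 -` D \<inter> space M)" by (rule int_ind) auto
      show "0 < prob (Y2 -` D \<inter> space M)" by (rule kpos)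
      fix \<theta> :: real
      show "(\<integral>\<omega>. indicator D (Y2 \<omega>) * cos (\<theta> * Y1 \<omega>) \<partial>M) = prob (Y2 -` D \<inter> space M) * (\<integral>\<omega>. cos (\<theta> * Y1 \<omega>) \<partial>M)"
        using st1[of \<theta>] c1[of \<theta>] by (simp add: mult.commute)
      show "(\<integral>\<omega>. indicator D (Y2 \<omega>) * sin (\<theta> * Y1 \<omega>) \<partial>M) = prob (Y2 -` D \<inter> space M) * (\<integral>\<omega>. sin (\<theta> * Y1 \<omega>) \<partial>M)"
        using st1[of \<theta>] s1'[of \<theta>] by (simp add: mult.commute)
    qed auto
    thus ?thesis using int_ind2[of Y2 D Y1 B] by simp
  qed
qed

lemma gen_sigma_vimage: "gen_sigma M Y = vimage_algebra (space M) Y borel"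
  unfolding gen_sigma_def vimage_algebra_def ..

lemma sets_gen_sigma: "sets (gen_sigma M Y) = {Y -` A \<inter> space M | A. A \<in> sets borel}"
  unfolding gen_sigma_vimage by (rule sets_vimage_algebra2) auto

lemma space_gen_sigma: "space (gen_sigma M Y) = space M"
  unfolding gen_sigma_vimage by simp

lemma subalg_gen_sigma:
  assumes "Y \<in> borel_measurable M"
  shows "subalgebra M (gen_sigma M Y)"
  unfolding subalgebra_def sets_gen_sigma space_gen_sigma using assms by (auto simp: measurable_sets)

lemma meas_gen_sigma: "Y \<in> borel_measurable (gen_sigma M Y)"
  by (rule measurableI) (auto simp: space_gen_sigma sets_gen_sigma)

lemma nat_filt_facts:
  assumes gm: "\<And>t. t \<ge> 0 \<Longrightarrow> G t \<in> borel_measurable M" and s: "s \<ge> 0"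
  shows "subalgebra M (nat_filtration M G s)"
    and "\<And>r. 0 \<le> r \<Longrightarrow> r \<le> s \<Longrightarrow> G r \<in> borel_measurable (nat_filtration M G s)"
proof -
  let ?Gen = "\<Union>r\<in>{0..s}. {G r -` A \<inter> space M | A. A \<in> sets borel}"
  have gp: "?Gen \<subseteq> Pow (space M)" by auto
  have gs: "?Gen \<subseteq> sets M" using gm by (auto simp: measurable_sets)
  have sp: "space (nat_filtration M G s) = space M"
    unfolding nat_filtration_def by (simp add: space_measure_of_conv)
  have st: "sets (nat_filtration M G s) = sigma_sets (space M) ?Gen"
    unfolding nat_filtration_def using gp by (simp add: sets_measure_of_conv)
  show "subalgebra M (nat_filtration M G s)"
    unfolding subalgebra_def sp st using sets.sigma_sets_subset[OF gs] by simp
  fix r assume r: "0 \<le> r" "r \<le> s"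
  show "G r \<in> borel_measurable (nat_filtration M G s)"
  proof (rule measurableI)
    fix A :: "real set" assume "A \<in> sets borel"
    hence "G r -` A \<inter> space M \<in> {G r -` A \<inter> space M | A. A \<in> sets borel}" by blast
    hence "G r -` A \<inter> space M \<in> ?Gen" using r by (intro UN_I[of r]) auto
    thus "G r -` A \<inter> space (nat_filtration M G s) \<in> sets (nat_filtration M G s)"
      unfolding sp st by (rule sigma_sets.Basic)
  qed simp
qed

lemma (in prob_space) sfs: "subalgebra M F \<Longrightarrow> sigma_finite_subalgebra M F"
  by (intro finite_measure_subalgebra_is_sigma_finite)
     (simp add: finite_measure_subalgebra_def finite_measure_subalgebra_axioms_def finite_measure_axioms)

lemma (in prob_space) VX_gauss:
  assumes cg: "centered_gaussian_process M G (Kac \<alpha> c a)" and h: "h > 0"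
  shows "(\<integral>\<omega>. cos (x * (G h \<omega> - G (2*h) \<omega> / 2) + y * G (2*h) \<omega>) \<partial>M)
        = exp (- (x^2 * (fac \<alpha> c a h - fac \<alpha> c a (2*h) / 4) + y^2 * fac \<alpha> c a (2*h)) / 2)"
    and "(\<integral>\<omega>. sin (x * (G h \<omega> - G (2*h) \<omega> / 2) + y * G (2*h) \<omega>) \<partial>M) = 0"
proof -
  have eq: "x * (G h \<omega> - G (2*h) \<omega> / 2) + y * G (2*h) \<omega> = x * G h \<omega> + (y - x/2) * G (2*h) \<omega> + 0 * G (3*h) \<omega>" for \<omega>
    by (simp add: algebra_simps)
  have Q: "Q3 (fac \<alpha> c a h) (fac \<alpha> c a (2*h)) (fac \<alpha> c a (3*h)) x (y - x/2) 0
     = x^2 * (fac \<alpha> c a h - fac \<alpha> c a (2*h) / 4) + y^2 * fac \<alpha> c a (2*h)"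
    unfolding Q3_def by (simp add: power2_eq_square algebra_simps)
  show "(\<integral>\<omega>. cos (x * (G h \<omega> - G (2*h) \<omega> / 2) + y * G (2*h) \<omega>) \<partial>M)
        = exp (- (x^2 * (fac \<alpha> c a h - fac \<alpha> c a (2*h) / 4) + y^2 * fac \<alpha> c a (2*h)) / 2)"
    unfolding eq gauss3(1)[OF cg h] Q ..
  show "(\<integral>\<omega>. sin (x * (G h \<omega> - G (2*h) \<omega> / 2) + y * G (2*h) \<omega>) \<partial>M) = 0"
    unfolding eq gauss3(2)[OF cg h] ..
qed

lemma (in prob_space) markov_indep:
  assumes cg: "centered_gaussian_process M G (Kac \<alpha> c a)" and h: "h > 0"
    and mk: "markov_process M G"
    and A[measurable]: "A \<in> sets borel" and B[measurable]: "B \<in> sets borel"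
  shows "prob (G (3*h) -` A \<inter> (\<lambda>\<omega>. G h \<omega> - G (2*h) \<omega> / 2) -` B \<inter> space M)
       = prob (G (3*h) -` A \<inter> space M) * prob ((\<lambda>\<omega>. G h \<omega> - G (2*h) \<omega> / 2) -` B \<inter> space M)"
proof -
  have gm: "\<And>t. t \<ge> 0 \<Longrightarrow> G t \<in> borel_measurable M" using cg unfolding centered_gaussian_process_def by blast
  define V where "V \<omega> = G h \<omega> - G (2*h) \<omega> / 2" for \<omega>
  define F where "F = nat_filtration M G (2*h)"
  define H where "H = gen_sigma M (G (2*h))"
  have [measurable]: "G h \<in> borel_measurable M" "G (2*h) \<in> borel_measurable M" "G (3*h) \<in> borel_measurable M"
    using gm h by auto
  have Vm[measurable]: "V \<in> borel_measurable M" unfolding V_def by measurable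
  have subF: "subalgebra M F" unfolding F_def using nat_filt_facts(1)[OF gm] h by auto
  have subH: "subalgebra M H" unfolding H_def by (rule subalg_gen_sigma) measurable
  interpret F: sigma_finite_subalgebra M F by (rule sfs[OF subF])
  interpret H: sigma_finite_subalgebra M H by (rule sfs[OF subH])
  have [measurable]: "G h \<in> borel_measurable F" "G (2*h) \<in> borel_measurable F"
    unfolding F_def using nat_filt_facts(2)[OF gm] h by auto
  have VF[measurable]: "V \<in> borel_measurable F" unfolding V_def by measurable
  have X2H: "G (2*h) \<in> borel_measurable H" unfolding H_def by (rule meas_gen_sigma)
  define ind where "ind \<omega> = (indicator A (G (3*h) \<omega>) :: real)" for \<omega>
  define fB where "fB \<omega> = (indicator B (V \<omega>) :: real)" for \<omega>
  have ind_m[measurable]: "ind \<in> borel_measurable M" unfolding ind_def by measurable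
  have fB_m[measurable]: "fB \<in> borel_measurable M" unfolding fB_def by measurable
  have fB_F[measurable]: "fB \<in> borel_measurable F" unfolding fB_def by measurable
  have ind_int: "integrable M ind" unfolding ind_def by (rule bnd_int'[where B=1], simp add: indicator_def, measurable)
  have fB_int: "integrable M fB" unfolding fB_def by (rule bnd_int'[where B=1], simp add: indicator_def, measurable)
  have mkAE: "AE \<omega> in M. real_cond_exp M F ind \<omega> = real_cond_exp M H ind \<omega>"
    using mk A h unfolding markov_process_def F_def H_def ind_def by auto
  define pB where "pB = prob (V -` B \<inter> space M)"
  have ceB: "AE \<omega> in M. real_cond_exp M H fB \<omega> = pB"
  proof (rule H.real_cond_exp_charact)
    fix E assume "E \<in> sets H"
    then obtain D where D: "D \<in> sets borel" "E = G (2*h) -` D \<inter> space M"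
      unfolding H_def sets_gen_sigma by blast
    have [measurable]: "D \<in> sets borel" by (rule D(1))
    have Em: "E \<in> sets M" unfolding D(2) by measurable
    have "(\<integral>\<omega>\<in>E. fB \<omega> \<partial>M) = (\<integral>\<omega>. indicator D (G (2*h) \<omega>) * indicator B (V \<omega>) \<partial>M)"
      unfolding set_lebesgue_integral_def D(2) fB_def
      by (rule Bochner_Integration.integral_cong[OF refl]) (auto simp: indicator_def)
    also have "\<dots> = prob (G (2*h) -` D \<inter> V -` B \<inter> space M)" by (rule int_ind2) auto
    also have "\<dots> = prob (G (2*h) -` D \<inter> space M) * pB"
      unfolding pB_def
    proof (rule indep2)
      fix x y :: real
      show "(\<integral>\<omega>. cos (x * V \<omega> + y * G (2*h) \<omega>) \<partial>M) = exp (- (x^2 * (fac \<alpha> c a h - fac \<alpha> c a (2*h) / 4) + y^2 * fac \<alpha> c a (2*h)) / 2)"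
        unfolding V_def by (rule VX_gauss(1)[OF cg h])
      show "(\<integral>\<omega>. sin (x * V \<omega> + y * G (2*h) \<omega>) \<partial>M) = 0"
        unfolding V_def by (rule VX_gauss(2)[OF cg h])
    qed auto
    also have "\<dots> = (\<integral>\<omega>\<in>E. pB \<partial>M)"
      using Em unfolding D(2) by (simp add: set_integral_const emeasure_eq_measure Int_absorb2)
    finally show "(\<integral>\<omega>\<in>E. fB \<omega> \<partial>M) = (\<integral>\<omega>\<in>E. pB \<partial>M)" .
  qed (auto simp: fB_int)
  have i1: "integrable M (\<lambda>\<omega>. fB \<omega> * ind \<omega>)"
    by (rule bnd_int'[where B=1], simp add: fB_def ind_def indicator_def, measurable)
  have ceH_int: "integrable M (real_cond_exp M H ind)" by (rule H.real_cond_exp_int(1)[OF ind_int])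
  have i2: "integrable M (\<lambda>\<omega>. real_cond_exp M H ind \<omega> * fB \<omega>)"
  proof (rule Bochner_Integration.integrable_bound[OF ceH_int])
    show "(\<lambda>\<omega>. real_cond_exp M H ind \<omega> * fB \<omega>) \<in> borel_measurable M" by measurable
    show "AE x in M. norm (real_cond_exp M H ind x * fB x) \<le> norm (real_cond_exp M H ind x)"
      by (intro AE_I2) (auto simp: fB_def indicator_def)
  qed
  have "prob (V -` B \<inter> G (3*h) -` A \<inter> space M) = (\<integral>\<omega>. fB \<omega> * ind \<omega> \<partial>M)"
    unfolding fB_def ind_def by (rule int_ind2[symmetric]) auto
  also have "\<dots> = (\<integral>\<omega>. fB \<omega> * real_cond_exp M F ind \<omega> \<partial>M)"
    by (rule F.real_cond_exp_intg(2)[symmetric, OF i1]) auto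
  also have "\<dots> = (\<integral>\<omega>. fB \<omega> * real_cond_exp M H ind \<omega> \<partial>M)"
    by (rule integral_cong_AE) (use mkAE in auto)
  also have "\<dots> = (\<integral>\<omega>. real_cond_exp M H ind \<omega> * fB \<omega> \<partial>M)"
    by (simp add: mult.commute)
  also have "\<dots> = (\<integral>\<omega>. real_cond_exp M H ind \<omega> * real_cond_exp M H fB \<omega> \<partial>M)"
    by (rule H.real_cond_exp_intg(2)[symmetric, OF i2]) auto
  also have "\<dots> = (\<integral>\<omega>. real_cond_exp M H ind \<omega> * pB \<partial>M)"
    by (rule integral_cong_AE) (use ceB in auto)
  also have "\<dots> = (\<integral>\<omega>. real_cond_exp M H ind \<omega> \<partial>M) * pB" by simp
  also have "(\<integral>\<omega>. real_cond_exp M H ind \<omega> \<partial>M) = (\<integral>\<omega>. ind \<omega> \<partial>M)"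
    by (rule H.real_cond_exp_int(2)[OF ind_int])
  also have "(\<integral>\<omega>. ind \<omega> \<partial>M) = prob (G (3*h) -` A \<inter> space M)"
    unfolding ind_def by (rule int_ind) auto
  finally have "prob (V -` B \<inter> G (3*h) -` A \<inter> space M) = prob (G (3*h) -` A \<inter> space M) * pB" by simp
  moreover have "V -` B \<inter> G (3*h) -` A \<inter> space M = G (3*h) -` A \<inter> V -` B \<inter> space M" by auto
  ultimately show ?thesis unfolding pB_def V_def by simp
qed

lemma (in prob_space) char1:
  fixes Y :: "'a \<Rightarrow> real"
  assumes Y[measurable]: "Y \<in> borel_measurable M" and s: "(\<integral>\<omega>. sin (Y \<omega>) \<partial>M) = 0"
  shows "char (distr M borel Y) 1 = complex_of_real (\<integral>\<omega>. cos (Y \<omega>) \<partial>M)"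
proof -
  have int: "integrable M (\<lambda>\<omega>. iexp (Y \<omega>))"
    by (rule bnd_int'[where B=1], simp, measurable)
  have "char (distr M borel Y) 1 = (CLINT \<omega>|M. iexp (Y \<omega>))"
    unfolding char_def by (simp add: integral_distr)
  also have "\<dots> = complex_of_real (\<integral>\<omega>. cos (Y \<omega>) \<partial>M)"
  proof (rule complex_eqI)
    have "Re (CLINT \<omega>|M. iexp (Y \<omega>)) = (\<integral>\<omega>. Re (iexp (Y \<omega>)) \<partial>M)" by (rule integral_Re[OF int, symmetric])
    thus "Re (CLINT \<omega>|M. iexp (Y \<omega>)) = Re (complex_of_real (\<integral>\<omega>. cos (Y \<omega>) \<partial>M))" by (simp add: Re_exp)
    have "Im (CLINT \<omega>|M. iexp (Y \<omega>)) = (\<integral>\<omega>. Im (iexp (Y \<omega>)) \<partial>M)" by (rule integral_Im[OF int, symmetric])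
    thus "Im (CLINT \<omega>|M. iexp (Y \<omega>)) = Im (complex_of_real (\<integral>\<omega>. cos (Y \<omega>) \<partial>M))" using s by (simp add: Im_exp)
  qed
  finally show ?thesis .
qed

lemma (in prob_space) markov_contra:
  assumes cg: "centered_gaussian_process M G (Kac \<alpha> c a)" and h: "h > 0"
    and mk: "markov_process M G"
  shows "3 * fac \<alpha> c a h - 3 * fac \<alpha> c a (2*h) + fac \<alpha> c a (3*h) = 0"
proof -
  have gm: "\<And>t. t \<ge> 0 \<Longrightarrow> G t \<in> borel_measurable M" using cg unfolding centered_gaussian_process_def by blast
  define V where "V \<omega> = G h \<omega> - G (2*h) \<omega> / 2" for \<omega>
  define X where "X = G (3*h)"
  have [measurable]: "G h \<in> borel_measurable M" "G (2*h) \<in> borel_measurable M" "G (3*h) \<in> borel_measurable M"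
    using gm h by auto
  have Xm[measurable]: "X \<in> borel_measurable M" unfolding X_def using gm h by auto
  have Vm[measurable]: "V \<in> borel_measurable M" unfolding V_def by measurable
  have prodf: "prob (X -` A \<inter> V -` B \<inter> space M) = prob (X -` A \<inter> space M) * prob (V -` B \<inter> space M)"
    if "A \<in> sets borel" "B \<in> sets borel" for A B
    unfolding X_def V_def using markov_indep[OF cg h mk that] .
  have stab: "Int_stable {Y -` A \<inter> space M | A. A \<in> sets borel}" for Y :: "'a \<Rightarrow> real"
    unfolding Int_stable_def
  proof (intro ballI)
    fix a b assume "a \<in> {Y -` A \<inter> space M | A. A \<in> sets borel}" "b \<in> {Y -` A \<inter> space M | A. A \<in> sets borel}"
    then obtain A1 A2 where "a = Y -` A1 \<inter> space M" "A1 \<in> sets borel" "b = Y -` A2 \<inter> space M" "A2 \<in> sets borel" by blast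
    hence "a \<inter> b = Y -` (A1 \<inter> A2) \<inter> space M" "A1 \<inter> A2 \<in> sets borel" by blast+
    thus "a \<inter> b \<in> {Y -` A \<inter> space M | A. A \<in> sets borel}" by blast
  qed
  have indep: "indep_var borel X borel V"
    unfolding indep_var_eq
  proof (intro conjI)
    show "random_variable borel X" "random_variable borel V" using Xm Vm by auto
    show "indep_set (sigma_sets (space M) {X -` A \<inter> space M |A. A \<in> sets borel})
                    (sigma_sets (space M) {V -` A \<inter> space M |A. A \<in> sets borel})"
    proof (rule indep_set_sigma_sets[OF _ stab stab])
      show "indep_set {X -` A \<inter> space M |A. A \<in> sets borel} {V -` A \<inter> space M |A. A \<in> sets borel}"
      proof (rule indep_setI)
        show "{X -` A \<inter> space M |A. A \<in> sets borel} \<subseteq> events" using measurable_sets[OF Xm] by blast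
        show "{V -` A \<inter> space M |A. A \<in> sets borel} \<subseteq> events" using measurable_sets[OF Vm] by blast
        fix a b assume "a \<in> {X -` A \<inter> space M |A. A \<in> sets borel}" "b \<in> {V -` A \<inter> space M |A. A \<in> sets borel}"
        then obtain A1 A2 where ab: "a = X -` A1 \<inter> space M" "A1 \<in> sets borel" "b = V -` A2 \<inter> space M" "A2 \<in> sets borel" by blast
        have "a \<inter> b = X -` A1 \<inter> V -` A2 \<inter> space M" unfolding ab by blast
        hence "prob (a \<inter> b) = prob (X -` A1 \<inter> V -` A2 \<inter> space M)" by (rule arg_cong)
        also have "\<dots> = prob a * prob b" unfolding ab(1) ab(3) by (rule prodf[OF ab(2) ab(4)])
        finally show "prob (a \<inter> b) = prob a * prob b" .
      qed
    qed
  qed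
  let ?f1 = "fac \<alpha> c a h" and ?f2 = "fac \<alpha> c a (2*h)" and ?f3 = "fac \<alpha> c a (3*h)"
  have eS: "(\<lambda>\<omega>. X \<omega> + V \<omega>) = (\<lambda>\<omega>. 1 * G h \<omega> + (-1/2) * G (2*h) \<omega> + 1 * G (3*h) \<omega>)"
    unfolding X_def V_def by (auto simp: fun_eq_iff)
  have eX: "X = (\<lambda>\<omega>. 0 * G h \<omega> + 0 * G (2*h) \<omega> + 1 * G (3*h) \<omega>)"
    unfolding X_def by (auto simp: fun_eq_iff)
  have eV: "V = (\<lambda>\<omega>. 1 * G h \<omega> + (-1/2) * G (2*h) \<omega> + 0 * G (3*h) \<omega>)"
    unfolding V_def by (auto simp: fun_eq_iff)
  have cS: "char (distr M borel (\<lambda>\<omega>. X \<omega> + V \<omega>)) 1 = complex_of_real (exp (- Q3 ?f1 ?f2 ?f3 1 (-1/2) 1 / 2))"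
  proof -
    have m: "(\<lambda>\<omega>. 1 * G h \<omega> + (-1/2) * G (2*h) \<omega> + 1 * G (3*h) \<omega>) \<in> borel_measurable M" by measurable
    show ?thesis unfolding eS char1[OF m gauss3(2)[OF cg h]] gauss3(1)[OF cg h] ..
  qed
  have cX: "char (distr M borel X) 1 = complex_of_real (exp (- Q3 ?f1 ?f2 ?f3 0 0 1 / 2))"
  proof -
    have m: "(\<lambda>\<omega>. 0 * G h \<omega> + 0 * G (2*h) \<omega> + 1 * G (3*h) \<omega>) \<in> borel_measurable M" by measurable
    show ?thesis unfolding eX char1[OF m gauss3(2)[OF cg h]] gauss3(1)[OF cg h] ..
  qed
  have cV: "char (distr M borel V) 1 = complex_of_real (exp (- Q3 ?f1 ?f2 ?f3 1 (-1/2) 0 / 2))"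
  proof -
    have m: "(\<lambda>\<omega>. 1 * G h \<omega> + (-1/2) * G (2*h) \<omega> + 0 * G (3*h) \<omega>) \<in> borel_measurable M" by measurable
    show ?thesis unfolding eV char1[OF m gauss3(2)[OF cg h]] gauss3(1)[OF cg h] ..
  qed
  have "char (distr M borel (\<lambda>\<omega>. X \<omega> + V \<omega>)) 1 = char (distr M borel X) 1 * char (distr M borel V) 1"
    by (rule char_distr_add[OF indep])
  hence "exp (- Q3 ?f1 ?f2 ?f3 1 (-1/2) 1 / 2) = exp (- Q3 ?f1 ?f2 ?f3 0 0 1 / 2) * exp (- Q3 ?f1 ?f2 ?f3 1 (-1/2) 0 / 2)"
    unfolding cS cX cV by (simp only: of_real_mult[symmetric] of_real_eq_iff)
  hence "- Q3 ?f1 ?f2 ?f3 1 (-1/2) 1 / 2 = - Q3 ?f1 ?f2 ?f3 0 0 1 / 2 + - Q3 ?f1 ?f2 ?f3 1 (-1/2) 0 / 2"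
    by (simp only: exp_add[symmetric] exp_inj_iff)
  thus ?thesis unfolding Q3_def by (simp add: field_simps power2_eq_square)
qed

theorem proposition3p10:
  fixes \<alpha> c a :: real and M :: "'a measure" and G :: "real \<Rightarrow> 'a \<Rightarrow> real"
  assumes "0 < \<alpha>" and "\<alpha> \<le> 2" and "0 < c" and "0 < a"
    and "prob_space M"
    and "centered_gaussian_process M G (Kac \<alpha> c a)"
  shows "\<not> markov_process M G"
proof
  assume mk: "markov_process M G"
  interpret P: prob_space M by fact
  obtain h where h: "h > 0" and pos: "3 * fac \<alpha> c a h - 3 * fac \<alpha> c a (2*h) + fac \<alpha> c a (3*h) > 0"
    using exists_h[OF assms(1) assms(3) assms(4)] by blast
  have "3 * fac \<alpha> c a h - 3 * fac \<alpha> c a (2*h) + fac \<alpha> c a (3*h) = 0"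
    by (rule P.markov_contra[OF assms(6) h mk])
  thus False using pos by simp
qed

end
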